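(* There exist instances (a graph with fixed nonnegative embedding weights, features and binary labels) for which the gap between (i) the best accuracy achievable by a linear graph-based classifier on non-strategic data and (ii) the best accuracy achievable by a linear graph-based classifier on strategic data is at least $30\%$ (i.e., at least $0.3$ in accuracy).
   Context: Users $i\in[n]$ have features $x_i\in\mathbb{R}^\ell$ and labels $y_i\in\{\pm1\}$; embeddings $\phi(x_i;x_{-i})=\widetilde{w}_{ii}x_i+\sum_{j\neq i}\widetilde{w}_{ji}x_j$ with fixed $\widetilde{w}_{ji}\ge0$. Classifiers: $h_{\theta,b}(x_i;x_{-i})=\mathrm{sign}(\theta^\top\phi(x_i;x_{-i})+b)$, $\mathrm{sign}(0)=+1$, over all $\theta\in\mathbb{R}^\ell,b\in\mathbb{R}$. Cost $c(x,x')=\|x-x'\|_2$. Strategic data: users respond to $h$ by myopic best-response dynamics ($x_i^{(0)}=x_i$; at each round all users update concurrently; user $i$ changes her features only if currently classified $-1$ and some $x'$ with $h(x';x_{-i})=+1$, with others' current features, has cost $\le 2$, in which case she moves to the minimum-cost such point), run until convergence, yielding $x^h$. Non-strategic accuracy of $h$: $\frac1n|\{i:h(x_i;x_{-i})=y_i\}|$; strategic accuracy: $\frac1n|\{i:h(x^h_i;x^h_{-i})=y_i\}|$. *)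

theory Defs
  imports Complex_Main
begin

text \<open>Users are indexed by i < n; a feature vector in R^l is a function nat => real
  supported on {..<l}.
  Embedding weights: W j i is the weight of user j's features in user i's embedding.\<close>

type_synonym vec = "nat \<Rightarrow> real"
type_synonym profile = "nat \<Rightarrow> vec"

definition vecs :: "nat \<Rightarrow> vec set" where
  "vecs l = {v. \<forall>k\<ge>l. v k = 0}"

definition dist_l :: "nat \<Rightarrow> vec \<Rightarrow> vec \<Rightarrow> real" where
  "dist_l l u v = sqrt (\<Sum>k<l. (u k - v k)^2)"

definition embed :: "nat \<Rightarrow> (nat \<Rightarrow> nat \<Rightarrow> real) \<Rightarrow> profile \<Rightarrow> nat \<Rightarrow> vec" where
  "embed n W X i = (\<lambda>k. \<Sum>j<n. W j i * X j k)"

definition clf :: "nat \<Rightarrow> nat \<Rightarrow> (nat \<Rightarrow> nat \<Rightarrow> real) \<Rightarrow> vec \<Rightarrow> real \<Rightarrow> profile \<Rightarrow> nat \<Rightarrow> int" where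
  "clf n l W \<theta> b X i =
     (if (\<Sum>k<l. \<theta> k * embed n W X i k) + b \<ge> 0 then 1 else -1)"

text \<open>One round of concurrent myopic best response (budget 2, Euclidean cost).\<close>
definition br_step :: "nat \<Rightarrow> nat \<Rightarrow> (nat \<Rightarrow> nat \<Rightarrow> real) \<Rightarrow> vec \<Rightarrow> real \<Rightarrow> profile \<Rightarrow> profile \<Rightarrow> bool" where
  "br_step n l W \<theta> b X X' \<longleftrightarrow>
     (\<forall>i. if i < n \<and> clf n l W \<theta> b X i = -1 \<and>
             (\<exists>x'\<in>vecs l. clf n l W \<theta> b (X(i := x')) i = 1 \<and> dist_l l (X i) x' \<le> 2)
          then X' i \<in> vecs l \<and> clf n l W \<theta> b (X(i := X' i)) i = 1 \<and>
               (\<forall>x''\<in>vecs l. clf n l W \<theta> b (X(i := x'')) i = 1 \<longrightarrow>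
                   dist_l l (X i) (X' i) \<le> dist_l l (X i) x'')
          else X' i = X i)"

definition is_traj :: "nat \<Rightarrow> nat \<Rightarrow> (nat \<Rightarrow> nat \<Rightarrow> real) \<Rightarrow> vec \<Rightarrow> real \<Rightarrow> profile \<Rightarrow> (nat \<Rightarrow> profile) \<Rightarrow> bool" where
  "is_traj n l W \<theta> b X tr \<longleftrightarrow> tr 0 = X \<and> (\<forall>t. br_step n l W \<theta> b (tr t) (tr (Suc t)))"

definition converged_at :: "(nat \<Rightarrow> profile) \<Rightarrow> nat \<Rightarrow> bool" where
  "converged_at tr T \<longleftrightarrow> (\<forall>t\<ge>T. tr t = tr T)"

text \<open>Accuracy of a classifier h evaluated on profile X (non-strategic: X = original features;
  strategic: X = converged profile x^h).\<close>
definition accuracy :: "nat \<Rightarrow> nat \<Rightarrow> (nat \<Rightarrow> nat \<Rightarrow> real) \<Rightarrow> (nat \<Rightarrow> int) \<Rightarrow> vec \<Rightarrow> real \<Rightarrow> profile \<Rightarrow> real" where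
  "accuracy n l W y \<theta> b X = real (card {i. i < n \<and> clf n l W \<theta> b X i = y i}) / real n"

end

theory Submission
  imports Defs
begin

definition Wq :: "nat \<Rightarrow> nat \<Rightarrow> real" where
  "Wq j i = (if j = 1 \<and> i = 1 then 1 else 0)"

definition Xq :: profile where
  "Xq i = (if i = 1 then (\<lambda>k. if k = 0 then 1 else 0) else (\<lambda>k. 0))"

definition yq :: "nat \<Rightarrow> int" where
  "yq i = (if i = 0 then 1 else -1)"

lemma sum2: "(\<Sum>j<(2::nat). f j) = f 0 + f 1"
  by (simp add: numeral_2_eq_2)

lemma embed0: "embed 2 Wq X 0 = (\<lambda>k. 0)"
  by (auto simp: embed_def Wq_def sum2)

lemma embed1: "embed 2 Wq X 1 = X 1"
  by (auto simp: embed_def Wq_def sum2)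

lemma embed1': "embed 2 Wq X (Suc 0) = X (Suc 0)"
  using embed1 by simp

lemma clf0: "clf 2 1 Wq \<theta> b X 0 = (if b \<ge> 0 then 1 else -1)"
  by (simp add: clf_def embed0)

lemma clf1: "clf 2 1 Wq \<theta> b X 1 = (if \<theta> 0 * X 1 0 + b \<ge> 0 then 1 else -1)"
  by (simp add: clf_def embed1 embed1')

lemma clf1': "clf 2 (Suc 0) Wq \<theta> b X (Suc 0) = (if \<theta> 0 * X (Suc 0) 0 + b \<ge> 0 then 1 else -1)"
  using clf1 by simp

lemma clf0': "clf 2 (Suc 0) Wq \<theta> b X 0 = (if b \<ge> 0 then 1 else -1)"
  using clf0 by simp

definition stable :: "vec \<Rightarrow> real \<Rightarrow> profile \<Rightarrow> bool" where
  "stable \<theta> b X \<longleftrightarrow> (\<forall>i. \<not> (i < 2 \<and> clf 2 1 Wq \<theta> b X i = -1 \<and>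
             (\<exists>x'\<in>vecs 1. clf 2 1 Wq \<theta> b (X(i := x')) i = 1 \<and> dist_l 1 (X i) x' \<le> 2)))"

lemma stable_step:
  assumes s: "stable \<theta> b X" and st: "br_step 2 1 Wq \<theta> b X X'"
  shows "X' = X"
proof (rule ext)
  fix i
  have "\<not> (i < 2 \<and> clf 2 1 Wq \<theta> b X i = -1 \<and>
             (\<exists>x'\<in>vecs 1. clf 2 1 Wq \<theta> b (X(i := x')) i = 1 \<and> dist_l 1 (X i) x' \<le> 2))"
    using s unfolding stable_def by blast
  moreover have "if i < 2 \<and> clf 2 1 Wq \<theta> b X i = -1 \<and>
             (\<exists>x'\<in>vecs 1. clf 2 1 Wq \<theta> b (X(i := x')) i = 1 \<and> dist_l 1 (X i) x' \<le> 2)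
          then X' i \<in> vecs 1 \<and> clf 2 1 Wq \<theta> b (X(i := X' i)) i = 1 \<and>
               (\<forall>x''\<in>vecs 1. clf 2 1 Wq \<theta> b (X(i := x'')) i = 1 \<longrightarrow>
                   dist_l 1 (X i) (X' i) \<le> dist_l 1 (X i) x'')
          else X' i = X i"
    using st unfolding br_step_def by blast
  ultimately show "X' i = X i" by (simp only: if_False)
qed

lemma lt2: "(i::nat) < 2 \<Longrightarrow> i = 0 \<or> i = 1" by auto

lemma user0_never: "\<not> (clf 2 1 Wq \<theta> b X 0 = -1 \<and>
             (\<exists>x'\<in>vecs 1. clf 2 1 Wq \<theta> b (X(0 := x')) 0 = 1 \<and> dist_l 1 (X 0) x' \<le> 2))"
  by (simp add: clf0 clf0')

lemma step_stable:
  assumes "br_step 2 1 Wq \<theta> b X X'"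
  shows "stable \<theta> b X'"
    and "clf 2 1 Wq \<theta> b X' 1 = -1 \<Longrightarrow> X' 1 = X 1 \<and> \<not> (\<exists>x'\<in>vecs 1. clf 2 1 Wq \<theta> b (X(1 := x')) 1 = 1 \<and> dist_l 1 (X 1) x' \<le> 2)"
proof -
  have s1: "(if 1 < (2::nat) \<and> clf 2 1 Wq \<theta> b X 1 = -1 \<and>
             (\<exists>x'\<in>vecs 1. clf 2 1 Wq \<theta> b (X(1 := x')) 1 = 1 \<and> dist_l 1 (X 1) x' \<le> 2)
          then X' 1 \<in> vecs 1 \<and> clf 2 1 Wq \<theta> b (X(1 := X' 1)) 1 = 1 \<and>
               (\<forall>x''\<in>vecs 1. clf 2 1 Wq \<theta> b (X(1 := x'')) 1 = 1 \<longrightarrow>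
                   dist_l 1 (X 1) (X' 1) \<le> dist_l 1 (X 1) x'')
          else X' 1 = X 1)"
    using assms unfolding br_step_def by blast
  show B: "clf 2 1 Wq \<theta> b X' 1 = -1 \<Longrightarrow> X' 1 = X 1 \<and> \<not> (\<exists>x'\<in>vecs 1. clf 2 1 Wq \<theta> b (X(1 := x')) 1 = 1 \<and> dist_l 1 (X 1) x' \<le> 2)"
  proof -
    assume a: "clf 2 1 Wq \<theta> b X' 1 = -1"
    show ?thesis
    proof (cases "1 < (2::nat) \<and> clf 2 1 Wq \<theta> b X 1 = -1 \<and>
             (\<exists>x'\<in>vecs 1. clf 2 1 Wq \<theta> b (X(1 := x')) 1 = 1 \<and> dist_l 1 (X 1) x' \<le> 2)")
      case True
      have "X' 1 \<in> vecs 1 \<and> clf 2 1 Wq \<theta> b (X(1 := X' 1)) 1 = 1 \<and>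
               (\<forall>x''\<in>vecs 1. clf 2 1 Wq \<theta> b (X(1 := x'')) 1 = 1 \<longrightarrow>
                   dist_l 1 (X 1) (X' 1) \<le> dist_l 1 (X 1) x'')"
        using s1 unfolding if_P[OF True] .
      then have "clf 2 1 Wq \<theta> b (X(1 := X' 1)) 1 = 1" by blast
      then show ?thesis using a unfolding clf1 by (simp split: if_splits)
    next
      case False
      have e: "X' 1 = X 1" using s1 unfolding if_not_P[OF False] .
      have "clf 2 1 Wq \<theta> b X 1 = -1" using a e unfolding clf1 by simp
      moreover have "1 < (2::nat)" by simp
      ultimately show ?thesis using False e by blast
    qed
  qed
  show "stable \<theta> b X'"
    unfolding stable_def
  proof (intro allI notI)
    fix i assume h: "i < 2 \<and> clf 2 1 Wq \<theta> b X' i = -1 \<and>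
             (\<exists>x'\<in>vecs 1. clf 2 1 Wq \<theta> b (X'(i := x')) i = 1 \<and> dist_l 1 (X' i) x' \<le> 2)"
    then have "i = 0 \<or> i = 1" by auto
    then show False
    proof
      assume "i = 0" then show False using h user0_never[of \<theta> b X'] by simp
    next
      assume i1: "i = 1"
      then have c: "clf 2 1 Wq \<theta> b X' 1 = -1" using h by simp
      from B[OF c] have e: "X' 1 = X 1" and n: "\<not> (\<exists>x'\<in>vecs 1. clf 2 1 Wq \<theta> b (X(1 := x')) 1 = 1 \<and> dist_l 1 (X 1) x' \<le> 2)" by auto
      from h i1 obtain x' where "x' \<in> vecs 1" "clf 2 1 Wq \<theta> b (X'(1 := x')) 1 = 1" "dist_l 1 (X' 1) x' \<le> 2" by auto
      then show False using n e by (auto simp: clf1 clf1')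
    qed
  qed
qed

lemma acc0: "accuracy 2 1 Wq yq (\<lambda>k. -1) (1/2) Xq = 1"
proof -
  have c0: "clf 2 1 Wq (\<lambda>k. -1) (1/2) Xq 0 = 1" unfolding clf0 by simp
  have c1: "clf 2 1 Wq (\<lambda>k. -1) (1/2) Xq 1 = -1" unfolding clf1 by (simp add: Xq_def)
  have "{i. i < 2 \<and> clf 2 1 Wq (\<lambda>k. -1) (1/2) Xq i = yq i} = {0, 1}"
  proof
    show "{0, 1} \<subseteq> {i. i < 2 \<and> clf 2 1 Wq (\<lambda>k. -1) (1/2) Xq i = yq i}"
      using c0 c1 by (simp add: yq_def)
    show "{i. i < 2 \<and> clf 2 1 Wq (\<lambda>k. -1) (1/2) Xq i = yq i} \<subseteq> {0, 1}"
      by (auto simp: less_2_cases_iff)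
  qed
  then show ?thesis by (simp add: accuracy_def)
qed

lemma main:
  assumes tr: "is_traj 2 1 Wq \<theta> b Xq tr"
  shows "(\<exists>T. converged_at tr T) \<and>
      (\<forall>T. converged_at tr T \<longrightarrow> accuracy 2 1 Wq yq \<theta> b (tr T) \<le> 1 - 3/10)"
proof -
  have t0: "tr 0 = Xq" and st: "\<And>t. br_step 2 1 Wq \<theta> b (tr t) (tr (Suc t))"
    using tr by (auto simp: is_traj_def)
  have stab: "stable \<theta> b (tr 1)" using step_stable(1)[OF st[of 0]] by simp
  have constS: "tr (Suc k) = tr (Suc 0)" for k
  proof (induction k)
    case 0 show ?case by (rule refl)
  next
    case (Suc m)
    have s1: "stable \<theta> b (tr (Suc 0))" using stab by (simp only: One_nat_def)
    have "stable \<theta> b (tr (Suc m))" using s1 Suc.IH by (simp only:)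
    then have "tr (Suc (Suc m)) = tr (Suc m)" by (rule stable_step[OF _ st[of "Suc m"]])
    then show ?case using Suc.IH by (simp only:)
  qed
  have const: "tr t = tr 1" if t1: "t \<ge> 1" for t
  proof -
    obtain k where "t = Suc k" using t1 by (cases t) auto
    then show ?thesis using constS[of k] by (simp only: One_nat_def)
  qed
  have conv: "converged_at tr 1" unfolding converged_at_def using const by blast
  have acc1: "accuracy 2 1 Wq yq \<theta> b (tr 1) \<le> 1/2"
  proof -
    have notboth: "\<not> (clf 2 1 Wq \<theta> b (tr 1) 0 = 1 \<and> clf 2 1 Wq \<theta> b (tr 1) 1 = -1)"
    proof
      assume a: "clf 2 1 Wq \<theta> b (tr 1) 0 = 1 \<and> clf 2 1 Wq \<theta> b (tr 1) 1 = -1"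
      then have b: "b \<ge> 0" by (simp add: clf0 clf0' split: if_splits)
      have a': "clf 2 1 Wq \<theta> b (tr (Suc 0)) 1 = -1" using a by (simp only: One_nat_def)
      have "\<not> (\<exists>x'\<in>vecs 1. clf 2 1 Wq \<theta> b ((tr 0)(1 := x')) 1 = 1 \<and> dist_l 1 (tr 0 1) x' \<le> 2)"
        using step_stable(2)[OF st[of 0] a'] by (rule conjunct2)
      then have
        n: "\<not> (\<exists>x'\<in>vecs 1. clf 2 1 Wq \<theta> b (Xq(1 := x')) 1 = 1 \<and> dist_l 1 (Xq 1) x' \<le> 2)"
        unfolding t0 .
      have "(\<lambda>k. 0::real) \<in> vecs 1" by (simp add: vecs_def)
      moreover have "clf 2 1 Wq \<theta> b (Xq(1 := (\<lambda>k. 0))) 1 = 1" using b by (simp add: clf1 clf1')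
      moreover have "dist_l 1 (Xq 1) (\<lambda>k. 0) \<le> 2" by (simp add: dist_l_def Xq_def)
      ultimately show False using n by blast
    qed
    have "{i. i < 2 \<and> clf 2 1 Wq \<theta> b (tr 1) i = yq i} \<subseteq> {0} \<or>
          {i. i < 2 \<and> clf 2 1 Wq \<theta> b (tr 1) i = yq i} \<subseteq> {1}"
    proof (cases "clf 2 1 Wq \<theta> b (tr 1) 0 = 1")
      case True
      then have nn: "clf 2 1 Wq \<theta> b (tr 1) 1 \<noteq> -1" using notboth by blast
      have "{i. i < 2 \<and> clf 2 1 Wq \<theta> b (tr 1) i = yq i} \<subseteq> {0}"
      proof
        fix i assume "i \<in> {i. i < 2 \<and> clf 2 1 Wq \<theta> b (tr 1) i = yq i}"
        then have "i < 2" "clf 2 1 Wq \<theta> b (tr 1) i = yq i" by auto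
        moreover have "yq 1 = -1" by (simp add: yq_def)
        ultimately show "i \<in> {0}" using nn lt2[of i] by (auto simp del: One_nat_def)
      qed
      then show ?thesis by blast
    next
      case False
      have "{i. i < 2 \<and> clf 2 1 Wq \<theta> b (tr 1) i = yq i} \<subseteq> {1}"
      proof
        fix i assume "i \<in> {i. i < 2 \<and> clf 2 1 Wq \<theta> b (tr 1) i = yq i}"
        then have "i < 2" "clf 2 1 Wq \<theta> b (tr 1) i = yq i" by auto
        moreover have "yq 0 = 1" by (simp add: yq_def)
        ultimately show "i \<in> {1}" using False lt2[of i] by (auto simp del: One_nat_def)
      qed
      then show ?thesis by blast
    qed
    then have "card {i. i < 2 \<and> clf 2 1 Wq \<theta> b (tr 1) i = yq i} \<le> 1"
      proof
      assume "{i. i < 2 \<and> clf 2 1 Wq \<theta> b (tr 1) i = yq i} \<subseteq> {0}"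
      from card_mono[OF _ this] show ?thesis by simp
    next
      assume "{i. i < 2 \<and> clf 2 1 Wq \<theta> b (tr 1) i = yq i} \<subseteq> {1}"
      from card_mono[OF _ this] show ?thesis by simp
    qed
    then show ?thesis by (simp add: accuracy_def)
  qed
  show ?thesis
  proof (intro conjI exI allI impI)
    show "converged_at tr 1" by fact
  next
    fix T assume "converged_at tr T"
    then have "\<forall>t\<ge>T. tr t = tr T" unfolding converged_at_def .
    moreover have "T \<le> max T 1" by (rule max.cobounded1)
    ultimately have "tr (max T 1) = tr T" by blast
    moreover have "tr (max T 1) = tr 1" using const[of "max T 1"] by linarith
    ultimately have "tr T = tr 1" by metis
    then have "accuracy 2 1 Wq yq \<theta> b (tr T) \<le> 1/2" using acc1 by (simp only:)
    then show "accuracy 2 1 Wq yq \<theta> b (tr T) \<le> 1 - 3/10" by linarith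
  qed
qed

theorem proposition5:
  shows "\<exists>(n::nat) (l::nat) (W::nat \<Rightarrow> nat \<Rightarrow> real) (X::profile) (y::nat \<Rightarrow> int).
     0 < n \<and> (\<forall>i<n. X i \<in> vecs l) \<and> (\<forall>i<n. \<forall>j<n. 0 \<le> W j i) \<and>
     (\<forall>i<n. y i = 1 \<or> y i = -1) \<and>
     (\<exists>\<theta>0 b0. \<forall>\<theta> b tr. is_traj n l W \<theta> b X tr \<longrightarrow>
        (\<exists>T. converged_at tr T) \<and>
        (\<forall>T. converged_at tr T \<longrightarrow>
           accuracy n l W y \<theta> b (tr T) \<le> accuracy n l W y \<theta>0 b0 X - 3/10))"
proof -
  show ?thesis
    apply (rule exI[of _ 2], rule exI[of _ 1], rule exI[of _ Wq], rule exI[of _ Xq], rule exI[of _ yq])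
    apply (intro conjI)
        apply simp
       apply (auto simp: vecs_def Xq_def)[1]
      apply (simp add: Wq_def)
     apply (simp add: yq_def)
    apply (rule exI[of _ "\<lambda>k. -1"], rule exI[of _ "1/2"])
    using main acc0 by simp
qed

end
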